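(* Let $W=\mathrm{des}(\pi)$ and $W^\ast=\mathrm{des}(\pi^\ast)$, where $\pi^\ast$ is constructed from $\pi$ as described in the context. Then $W^\ast$ has the $W$-size biased distribution.
   Context: Let $h\ge 2$, let $n_1,\dots,n_h$ be positive integers, $n=n_1+\dots+n_h\ge 4$, and let $\pi$ be a uniformly distributed permutation of the multiset $\{1^{n_1},\dots,h^{n_h}\}$ (a sequence $(\pi(1),\dots,\pi(n))$ in which each $a$ occurs $n_a$ times, all such sequences equally likely). $\mathrm{des}(\pi)$ is the number of $i\in\{1,\dots,n-1\}$ with $\pi(i)>\pi(i+1)$. For a nonnegative integrable random variable $W$ with $\mathbb{E}W>0$, a random variable $W^\ast$ has the $W$-size biased distribution if $\mathbb{E}(Wf(W))=\mathbb{E}W\,\mathbb{E}f(W^\ast)$ for all continuous $f$ for which the left side exists. Construction of $\pi^\ast$: Let $I$ be uniformly distributed over $\{(1,2),(2,3),\dots,(n-1,n)\}$; let $J=(a,b)$, for $h\ge a>b\ge 1$, with probability $n_an_b/\sum_{c<d}n_cn_d$; $\pi,I,J$ are independent. Write $I=(i,j)$ with $j=i+1$. If $\pi(i)>\pi(j)$, set $\pi^\ast=\pi$. If $\pi(i)\le\pi(j)$ and $J=(a,b)$: choose $i^\ast$ uniformly from $\{k:\pi(k)=a\}$ and $j^\ast$ uniformly from $\{k:\pi(k)=b\}$, independently of each other and of all else. Then: (1) if $\{i,j\}\cap\{i^\ast,j^\ast\}=\emptyset$, or $i=i^\ast,j\ne j^\ast$, or $i\ne i^\ast,j=j^\ast$,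 obtain $\pi^\ast$ from $\pi$ by exchanging the entries at positions $i$ and $i^\ast$ and exchanging the entries at positions $j$ and $j^\ast$; (2) if $i=j^\ast$ and $j=i^\ast$, exchange the entries at positions $i$ and $j$; (3) if $i=j^\ast$, $j\ne i^\ast$, set $\pi^\ast(i)=\pi(i^\ast)$, $\pi^\ast(j)=\pi(i)$, $\pi^\ast(i^\ast)=\pi(j)$, and $\pi^\ast(k)=\pi(k)$ for $k\notin\{i,j,i^\ast\}$; (4) if $i\ne j^\ast$, $j=i^\ast$, set $\pi^\ast(i)=\pi(j)$, $\pi^\ast(j)=\pi(j^\ast)$, $\pi^\ast(j^\ast)=\pi(i)$, and $\pi^\ast(k)=\pi(k)$ for $k\notin\{i,j,j^\ast\}$. *)

theory Defs
  imports "HOL-Probability.Probability"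
begin

text \<open>Sequences are lists; positions are 0-indexed (position k of the list is position k+1 of the paper).\<close>

definition mperms :: "nat \<Rightarrow> (nat \<Rightarrow> nat) \<Rightarrow> nat list set" where
  "mperms h ns = {xs. set xs \<subseteq> {1..h} \<and> (\<forall>a\<in>{1..h}. count (mset xs) a = ns a)}"

definition des :: "nat list \<Rightarrow> nat" where
  "des xs = card {i. Suc i < length xs \<and> xs ! i > xs ! Suc i}"

definition swap :: "nat list \<Rightarrow> nat \<Rightarrow> nat \<Rightarrow> nat list" where
  "swap xs k l = xs[k := xs ! l, l := xs ! k]"

text \<open>Modification of xs given I = (i, i+1) and the chosen positions i' (value a), j' (value b).\<close>
definition modify :: "nat list \<Rightarrow> nat \<Rightarrow> nat \<Rightarrow> nat \<Rightarrow> nat list" where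
  "modify xs i i' j' =
    (let j = Suc i in
     if i = j' \<and> j = i' then swap xs i j
     else if i = j' \<and> j \<noteq> i' then xs[i := xs ! i', j := xs ! i, i' := xs ! j]
     else if i \<noteq> j' \<and> j = i' then xs[i := xs ! j, j := xs ! j', j' := xs ! i]
     else swap (swap xs i i') j j')"

definition J_pmf :: "nat \<Rightarrow> (nat \<Rightarrow> nat) \<Rightarrow> (nat \<times> nat) pmf" where
  "J_pmf h ns = pmf_of_multiset
     (\<Sum>a\<in>{1..h}. \<Sum>b\<in>{1..<a}. replicate_mset (ns a * ns b) (a, b))"

definition pi_pmf :: "nat \<Rightarrow> (nat \<Rightarrow> nat) \<Rightarrow> nat list pmf" where
  "pi_pmf h ns = pmf_of_set (mperms h ns)"

definition pistar_pmf :: "nat \<Rightarrow> (nat \<Rightarrow> nat) \<Rightarrow> nat list pmf" where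
  "pistar_pmf h ns = do {
     p \<leftarrow> pi_pmf h ns;
     i \<leftarrow> pmf_of_set {0..<length p - 1};
     J \<leftarrow> J_pmf h ns;
     if p ! i > p ! Suc i then return_pmf p
     else do {
       i' \<leftarrow> pmf_of_set {k. k < length p \<and> p ! k = fst J};
       j' \<leftarrow> pmf_of_set {k. k < length p \<and> p ! k = snd J};
       return_pmf (modify p i i' j')
     }
   }"

definition size_biased :: "real pmf \<Rightarrow> real pmf \<Rightarrow> bool" where
  "size_biased X Y \<longleftrightarrow>
     (AE x in measure_pmf X. 0 \<le> x) \<and> integrable (measure_pmf X) (\<lambda>x. x) \<and>
     measure_pmf.expectation X (\<lambda>x. x) > 0 \<and>
     (\<forall>f :: real \<Rightarrow> real. continuous_on UNIV f \<longrightarrow>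
        integrable (measure_pmf X) (\<lambda>x. x * f x) \<longrightarrow>
        measure_pmf.expectation X (\<lambda>x. x * f x) =
        measure_pmf.expectation X (\<lambda>x. x) * measure_pmf.expectation Y f)"

end

theory Submission
  imports Defs
begin


lemma mset_swap'[simp]: "k < length xs \<Longrightarrow> l < length xs \<Longrightarrow> mset (swap xs k l) = mset xs"
  unfolding swap_def
  by (metis mset_swap list_update_swap nth_list_update_eq nth_list_update_neq length_list_update)

lemma length_swap[simp]: "length (swap xs k l) = length xs"
  by (simp add: swap_def)

lemma nth_swap: "k < length xs \<Longrightarrow> l < length xs \<Longrightarrow> m < length xs \<Longrightarrow>
  swap xs k l ! m = (if m = l then xs ! k else if m = k then xs ! l else xs ! m)"
  by (simp add: swap_def nth_list_update)

lemma modify_c3: "Suc i < length xs \<Longrightarrow> i' < length xs \<Longrightarrow> i' \<noteq> i \<Longrightarrow> i' \<noteq> Suc i \<Longrightarrow>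
   modify xs i i' i = swap (swap xs i (Suc i)) i i'"
  unfolding modify_def Let_def
  by (intro nth_equalityI) (auto simp: nth_swap nth_list_update)

lemma modify_c4: "Suc i < length xs \<Longrightarrow> j' < length xs \<Longrightarrow> j' \<noteq> i \<Longrightarrow> j' \<noteq> Suc i \<Longrightarrow>
   modify xs i (Suc i) j' = swap (swap xs i (Suc i)) (Suc i) j'"
  unfolding modify_def Let_def
  by (intro nth_equalityI) (auto simp: nth_swap nth_list_update)

lemma modify_c2: "modify xs i (Suc i) i = swap xs i (Suc i)"
  unfolding modify_def Let_def by simp

lemma modify_c1: "Suc i \<noteq> i' \<Longrightarrow> i \<noteq> j' \<Longrightarrow> modify xs i i' j' = swap (swap xs i i') (Suc i) j'"
  unfolding modify_def Let_def by simp



definition phi :: "nat \<Rightarrow> nat list \<times> nat \<times> nat \<Rightarrow> nat list \<times> nat \<times> nat" where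
 "phi i = (\<lambda>(p,i',j'). (modify p i i' j',
     if i = j' \<and> Suc i = i' then (Suc i, i) else if i = j' then (Suc i, i')
     else if Suc i = i' then (j', i) else (i', j')))"

definition psi :: "nat \<Rightarrow> nat list \<times> nat \<times> nat \<Rightarrow> nat list \<times> nat \<times> nat" where
 "psi i = (\<lambda>(q,k,l). if k = Suc i \<and> l = i then (swap q i (Suc i), Suc i, i)
   else if k = Suc i then (swap (swap q i (Suc i)) (Suc i) l, l, i)
   else if l = i then (swap (swap q i (Suc i)) i k, Suc i, k)
   else (swap (swap q i k) (Suc i) l, k, l))"

lemma psi_phi:
  assumes "Suc i < length p" "\<not> p ! i > p ! Suc i" "i' < length p" "p ! i' = a" "j' < length p" "p ! j' = b" "b < a"
  shows "psi i (phi i (p, i', j')) = (p, i', j')"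
proof -
  have ne: "i' \<noteq> j'" using assms by auto
  consider "i = j' \<and> Suc i = i'" | "i = j' \<and> Suc i \<noteq> i'" | "i \<noteq> j' \<and> Suc i = i'" | "i \<noteq> j' \<and> Suc i \<noteq> i'" by blast
  then show ?thesis
  proof cases
    case 1 then show ?thesis using assms unfolding phi_def psi_def
      by (auto simp: modify_c2 intro!: nth_equalityI simp: nth_swap)
  next
    case 2 then show ?thesis using assms ne unfolding phi_def psi_def
      by (auto simp: modify_c3 intro!: nth_equalityI simp: nth_swap)
  next
    case 3 then show ?thesis using assms ne unfolding phi_def psi_def
      by (auto simp: modify_c4 intro!: nth_equalityI simp: nth_swap)
  next
    case 4 then show ?thesis using assms ne unfolding phi_def psi_def
      by (auto simp: modify_c1 intro!: nth_equalityI simp: nth_swap)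
  qed
qed

lemma phi_psi:
  assumes "Suc i < length q" "q ! i = a" "q ! Suc i = b" "k < length q" "l < length q" "k \<noteq> l" "q ! k \<le> q ! l" "b < a"
  shows "phi i (psi i (q, k, l)) = (q, k, l)"
proof -
  have "\<not> (k = i \<and> l = Suc i)" using assms by auto
  consider "k = Suc i \<and> l = i" | "k = Suc i \<and> l \<noteq> i" | "k \<noteq> Suc i \<and> l = i" | "k \<noteq> Suc i \<and> l \<noteq> i" by blast
  then show ?thesis
  proof cases
    case 1 then show ?thesis using assms unfolding phi_def psi_def
      by (auto simp: modify_c2 intro!: nth_equalityI simp: nth_swap)
  next
    case 2 then show ?thesis using assms unfolding phi_def psi_def
      by (auto simp: modify_c3 intro!: nth_equalityI simp: nth_swap)
  next
    case 3 then show ?thesis using assms unfolding phi_def psi_def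
      by (auto simp: modify_c4 intro!: nth_equalityI simp: nth_swap)
  next
    case 4 then show ?thesis using assms unfolding phi_def psi_def
      by (auto simp: modify_c1 intro!: nth_equalityI simp: nth_swap)
  qed
qed



lemma phi_in:
  assumes "Suc i < length p" "\<not> p ! i > p ! Suc i" "i' < length p" "p ! i' = a" "j' < length p" "p ! j' = b" "b < a"
    and "phi i (p, i', j') = (q, k, l)"
  shows "mset q = mset p \<and> length q = length p \<and> q ! i = a \<and> q ! Suc i = b \<and> k < length q \<and> l < length q \<and> k \<noteq> l \<and> q ! k \<le> q ! l"
proof -
  have ne: "i' \<noteq> j'" using assms by auto
  consider "i = j' \<and> Suc i = i'" | "i = j' \<and> Suc i \<noteq> i'" | "i \<noteq> j' \<and> Suc i = i'" | "i \<noteq> j' \<and> Suc i \<noteq> i'" by blast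
  then show ?thesis
  proof cases
    case 1 then show ?thesis using assms unfolding phi_def
      by (auto simp: modify_c2 nth_swap)
  next
    case 2 then show ?thesis using assms ne unfolding phi_def
      by (auto simp: modify_c3 nth_swap)
  next
    case 3 then show ?thesis using assms ne unfolding phi_def
      by (auto simp: modify_c4 nth_swap)
  next
    case 4 then show ?thesis using assms ne unfolding phi_def
      by (auto simp: modify_c1 nth_swap)
  qed
qed

lemma psi_in:
  assumes "Suc i < length q" "q ! i = a" "q ! Suc i = b" "k < length q" "l < length q" "k \<noteq> l" "q ! k \<le> q ! l" "b < a"
    and "psi i (q, k, l) = (p, i', j')"
  shows "mset p = mset q \<and> length p = length q \<and> \<not> p ! i > p ! Suc i \<and> i' < length p \<and> p ! i' = a \<and> j' < length p \<and> p ! j' = b"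
proof -
  have "\<not> (k = i \<and> l = Suc i)" using assms by auto
  consider "k = Suc i \<and> l = i" | "k = Suc i \<and> l \<noteq> i" | "k \<noteq> Suc i \<and> l = i" | "k \<noteq> Suc i \<and> l \<noteq> i" by blast
  then show ?thesis
  proof cases
    case 1 then show ?thesis using assms unfolding psi_def
      by (auto simp: nth_swap)
  next
    case 2 then show ?thesis using assms unfolding psi_def
      by (auto simp: nth_swap)
  next
    case 3 then show ?thesis using assms unfolding psi_def
      by (auto simp: nth_swap)
  next
    case 4 then show ?thesis using assms unfolding psi_def
      by (auto simp: nth_swap split: if_split_asm)
  qed
qed




lemma sum_modify:
  fixes P :: "nat list set" and g :: "nat list \<Rightarrow> real"
  assumes len: "\<forall>p\<in>P. length p = n" and closed: "\<forall>p\<in>P. \<forall>q. mset q = mset p \<longrightarrow> q \<in> P"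
    and fin: "finite P" and i: "Suc i < n" and ab: "b < a"
  shows "(\<Sum>p\<in>{p\<in>P. \<not> p!i > p!Suc i}. \<Sum>i'\<in>{k. k<n \<and> p!k = a}. \<Sum>j'\<in>{k. k<n \<and> p!k = b}. g (modify p i i' j'))
   = (\<Sum>q\<in>{q\<in>P. q!i = a \<and> q!Suc i = b}. real (card {(k,l). k<n \<and> l<n \<and> k\<noteq>l \<and> q!k \<le> q!l}) * g q)"
proof -
  define D where "D = (SIGMA p:{p\<in>P. \<not> p!i > p!Suc i}. SIGMA i':{k. k<n \<and> p!k = a}. {k. k<n \<and> p!k = b})"
  define Cs where "Cs = (SIGMA q:{q\<in>P. q!i = a \<and> q!Suc i = b}. {(k,l). k<n \<and> l<n \<and> k\<noteq>l \<and> q!k \<le> q!l})"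
  have finD: "finite D" unfolding D_def using fin by (auto intro!: finite_SigmaI)
  have "(\<Sum>p\<in>{p\<in>P. \<not> p!i > p!Suc i}. \<Sum>i'\<in>{k. k<n \<and> p!k = a}. \<Sum>j'\<in>{k. k<n \<and> p!k = b}. g (modify p i i' j'))
     = (\<Sum>(p,i',j')\<in>D. g (modify p i i' j'))"
    unfolding D_def using fin
    by (subst sum.Sigma, auto simp: sum.Sigma split_def)
  also have "\<dots> = (\<Sum>x\<in>D. g (fst (phi i x)))"
    by (rule sum.cong) (auto simp: phi_def)
  also have "\<dots> = (\<Sum>y\<in>Cs. g (fst y))"
  proof (rule sum.reindex_bij_betw)
    show "bij_betw (phi i) D Cs"
    proof (rule bij_betw_byWitness[where f' = "psi i"])
      show "\<forall>x\<in>D. psi i (phi i x) = x"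
        using len i ab unfolding D_def by (auto intro!: psi_phi)
      show "\<forall>y\<in>Cs. phi i (psi i y) = y"
        using len i ab unfolding Cs_def by (auto intro!: phi_psi)
      show "phi i ` D \<subseteq> Cs"
      proof
        fix y assume "y \<in> phi i ` D"
        then obtain p i' j' where x: "(p,i',j') \<in> D" and y: "y = phi i (p,i',j')" by auto
        obtain q k l where qkl: "phi i (p,i',j') = (q,k,l)" by (cases "phi i (p,i',j')") auto
        have "p \<in> P" "length p = n" using x len unfolding D_def by auto
        with phi_in[OF _ _ _ _ _ _ ab qkl] x i have "mset q = mset p \<and> length q = length p \<and> q ! i = a \<and> q ! Suc i = b \<and> k < length q \<and> l < length q \<and> k \<noteq> l \<and> q ! k \<le> q ! l"
          unfolding D_def by auto
        then show "y \<in> Cs" using closed \<open>p \<in> P\<close> \<open>length p = n\<close> y qkl unfolding Cs_def by auto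
      qed
      show "psi i ` Cs \<subseteq> D"
      proof
        fix x assume "x \<in> psi i ` Cs"
        then obtain q k l where y: "(q,k,l) \<in> Cs" and x: "x = psi i (q,k,l)" by auto
        obtain p i' j' where pij: "psi i (q,k,l) = (p,i',j')" by (cases "psi i (q,k,l)") auto
        have "q \<in> P" "length q = n" using y len unfolding Cs_def by auto
        with psi_in[OF _ _ _ _ _ _ _ ab pij] y i have "mset p = mset q \<and> length p = length q \<and> \<not> p ! i > p ! Suc i \<and> i' < length p \<and> p ! i' = a \<and> j' < length p \<and> p ! j' = b"
          unfolding Cs_def by auto
        then show "x \<in> D" using closed \<open>q \<in> P\<close> \<open>length q = n\<close> x pij unfolding D_def by auto
      qed
    qed
  qed
  also have "\<dots> = (\<Sum>q\<in>{q\<in>P. q!i = a \<and> q!Suc i = b}. \<Sum>kl\<in>{(k,l). k<n \<and> l<n \<and> k\<noteq>l \<and> q!k \<le> q!l}. g q)"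
    unfolding Cs_def using fin
    by (subst sum.Sigma) (auto simp: split_def intro: finite_subset[of _ "{..<n} \<times> {..<n}"])
  also have "\<dots> = (\<Sum>q\<in>{q\<in>P. q!i = a \<and> q!Suc i = b}. real (card {(k,l). k<n \<and> l<n \<and> k\<noteq>l \<and> q!k \<le> q!l}) * g q)"
    by simp
  finally show ?thesis .
qed



definition Jset :: "nat \<Rightarrow> (nat \<times> nat) set" where
  "Jset h = (SIGMA a:{1..h}. {1..<a})"

definition Tval :: "nat \<Rightarrow> (nat \<Rightarrow> nat) \<Rightarrow> nat" where
  "Tval h ns = (\<Sum>a\<in>{1..h}. \<Sum>b\<in>{1..<a}. ns a * ns b)"

lemma finite_Jset[simp]: "finite (Jset h)" unfolding Jset_def by auto

lemma mperms_length: "p \<in> mperms h ns \<Longrightarrow> length p = (\<Sum>a\<in>{1..h}. ns a)"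
proof -
  assume p: "p \<in> mperms h ns"
  have "length p = size (mset p)" by simp
  also have "\<dots> = sum (count (mset p)) (set_mset (mset p))" by (rule size_multiset_overloaded_eq)
  also have "\<dots> = sum (count (mset p)) {1..h}"
  proof -
    have "set p \<subseteq> {1..h}" using p unfolding mperms_def by auto
    then show ?thesis by (intro sum.mono_neutral_left) (auto simp: count_eq_zero_iff)
  qed
  also have "\<dots> = (\<Sum>a\<in>{1..h}. ns a)" using p unfolding mperms_def by auto
  finally show ?thesis .
qed

lemma mperms_closed: "p \<in> mperms h ns \<Longrightarrow> mset q = mset p \<Longrightarrow> q \<in> mperms h ns"
proof -
  assume a: "p \<in> mperms h ns" "mset q = mset p"
  then have "set q = set p" by (metis set_mset_mset)
  then show ?thesis using a unfolding mperms_def by simp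
qed

lemma mperms_finite: "finite (mperms h ns)"
proof (rule finite_subset)
  show "mperms h ns \<subseteq> {xs. set xs \<subseteq> {1..h} \<and> length xs = (\<Sum>a\<in>{1..h}. ns a)}"
    using mperms_length by (auto simp: mperms_def)
  show "finite {xs. set xs \<subseteq> {1..h} \<and> length xs = (\<Sum>a\<in>{1..h}. ns a)}"
    by (rule finite_lists_length_eq) auto
qed

lemma mperms_nonempty: "mperms h ns \<noteq> {}"
proof -
  define p where "p = concat (map (\<lambda>a. replicate (ns a) a) [1..<Suc h])"
  have "set p \<subseteq> {1..h}" unfolding p_def by (auto simp: set_replicate_conv_if split: if_splits)
  moreover have "count (mset p) a = ns a" if "a \<in> {1..h}" for a
  proof -
    have "count (mset p) a = (\<Sum>x\<leftarrow>[1..<Suc h]. count (replicate_mset (ns x) x) a)"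
      unfolding p_def by (induct h) auto
    also have "\<dots> = (\<Sum>x\<in>{1..<Suc h}. (if x = a then ns x else 0))"
      by (simp add: sum_list_distinct_conv_sum_set)
    also have "\<dots> = ns a" using that by (simp add: sum.delta')
    finally show ?thesis .
  qed
  ultimately have "p \<in> mperms h ns" unfolding mperms_def by auto
  then show ?thesis by auto
qed

lemma mperms_card_val: "p \<in> mperms h ns \<Longrightarrow> a \<in> {1..h} \<Longrightarrow> card {k. k < length p \<and> p ! k = a} = ns a"
proof -
  assume p: "p \<in> mperms h ns" and a: "a \<in> {1..h}"
  have "card {k. k < length p \<and> p ! k = a} = length (filter ((=) a) p)"
    by (simp add: length_filter_conv_card eq_commute)
  also have "\<dots> = count (mset p) a" by (induct p) auto
  finally show ?thesis using p a unfolding mperms_def by auto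
qed

lemma mperms_vals: "p \<in> mperms h ns \<Longrightarrow> k < length p \<Longrightarrow> p ! k \<in> {1..h}"
  unfolding mperms_def using nth_mem by blast

lemma card_inv:
  assumes p: "p \<in> mperms h ns"
  shows "card {(k,l). k < length p \<and> l < length p \<and> p!k > p!l} = Tval h ns"
proof -
  have eq: "{(k,l). k < length p \<and> l < length p \<and> p!k > p!l} =
     (\<Union>ab\<in>Jset h. {k. k < length p \<and> p!k = fst ab} \<times> {l. l < length p \<and> p!l = snd ab})"
  proof (rule set_eqI, rule iffI)
    fix x assume "x \<in> {(k,l). k < length p \<and> l < length p \<and> p!k > p!l}"
    then obtain k l where x: "x = (k,l)" "k < length p" "l < length p" "p!k > p!l" by auto
    then have "(p!k, p!l) \<in> Jset h" using mperms_vals[OF p, of k] mperms_vals[OF p, of l]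
      unfolding Jset_def by auto
    then show "x \<in> (\<Union>ab\<in>Jset h. {k. k < length p \<and> p!k = fst ab} \<times> {l. l < length p \<and> p!l = snd ab})"
      using x by (intro UN_I[of "(p!k, p!l)"]) auto
  next
    fix x assume "x \<in> (\<Union>ab\<in>Jset h. {k. k < length p \<and> p!k = fst ab} \<times> {l. l < length p \<and> p!l = snd ab})"
    then show "x \<in> {(k,l). k < length p \<and> l < length p \<and> p!k > p!l}"
      unfolding Jset_def by auto
  qed
  have "card (\<Union>ab\<in>Jset h. {k. k < length p \<and> p!k = fst ab} \<times> {l. l < length p \<and> p!l = snd ab})
     = (\<Sum>ab\<in>Jset h. card ({k. k < length p \<and> p!k = fst ab} \<times> {l. l < length p \<and> p!l = snd ab}))"
    by (rule card_UN_disjoint) (auto intro: finite_subset[of _ "{..<length p}"])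
  also have "\<dots> = (\<Sum>ab\<in>Jset h. ns (fst ab) * ns (snd ab))"
  proof (rule sum.cong[OF refl])
    fix ab assume "ab \<in> Jset h"
    then have "fst ab \<in> {1..h}" "snd ab \<in> {1..h}" unfolding Jset_def by auto
    then show "card ({k. k < length p \<and> p!k = fst ab} \<times> {l. l < length p \<and> p!l = snd ab}) = ns (fst ab) * ns (snd ab)"
      by (simp add: card_cartesian_product mperms_card_val[OF p])
  qed
  also have "\<dots> = Tval h ns" unfolding Tval_def Jset_def
    by (subst sum.Sigma) (auto simp: split_def)
  finally show ?thesis using eq by simp
qed

definition Kset :: "nat list \<Rightarrow> (nat \<times> nat) set" where
  "Kset q = {(k,l). k < length q \<and> l < length q \<and> k \<noteq> l \<and> q!k \<le> q!l}"

lemma card_K: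
  assumes p: "p \<in> mperms h ns"
  shows "card (Kset p) = card {(k,l). k < length p \<and> l < length p \<and> k \<noteq> l} - Tval h ns"
proof -
  have "Kset p = {(k,l). k < length p \<and> l < length p \<and> k \<noteq> l} - {(k,l). k < length p \<and> l < length p \<and> p!k > p!l}"
    unfolding Kset_def by auto
  moreover have "{(k,l). k < length p \<and> l < length p \<and> p!k > p!l} \<subseteq> {(k,l). k < length p \<and> l < length p \<and> k \<noteq> l}"
    by auto
  moreover have "finite {(k,l). k < length p \<and> l < length p \<and> k \<noteq> l}"
    by (rule finite_subset[of _ "{..<length p} \<times> {..<length p}"]) auto
  ultimately show ?thesis using card_inv[OF p] by (simp add: card_Diff_subset finite_subset)
qed



lemma fin_bind_set: "finite S \<Longrightarrow> S \<noteq> {} \<Longrightarrow> (\<forall>x\<in>S. finite (set_pmf (f x))) \<Longrightarrow> finite (set_pmf (pmf_of_set S \<bind> f))"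
  by (simp add: set_bind_pmf)

lemma E_bind_set:
  fixes g :: "'b \<Rightarrow> real"
  assumes "finite S" "S \<noteq> {}" "\<forall>x\<in>S. finite (set_pmf (f x))"
  shows "measure_pmf.expectation (pmf_of_set S \<bind> f) g = (\<Sum>x\<in>S. measure_pmf.expectation (f x) g) / card S"
proof -
  have "measure_pmf.expectation (pmf_of_set S \<bind> f) g = (\<Sum>x\<in>S. pmf (pmf_of_set S) x *\<^sub>R measure_pmf.expectation (f x) g)"
    using assms by (intro pmf_expectation_bind) auto
  also have "\<dots> = (\<Sum>x\<in>S. measure_pmf.expectation (f x) g / card S)"
    using assms by (intro sum.cong) auto
  finally show ?thesis by (simp add: sum_divide_distrib)
qed

definition Jms :: "nat \<Rightarrow> (nat \<Rightarrow> nat) \<Rightarrow> (nat \<times> nat) multiset" where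
  "Jms h ns = (\<Sum>a\<in>{1..h}. \<Sum>b\<in>{1..<a}. replicate_mset (ns a * ns b) (a, b))"

lemma count_Jms: "count (Jms h ns) (a,b) = (if (a,b) \<in> Jset h then ns a * ns b else 0)"
proof -
  have "count (Jms h ns) (a,b) = (\<Sum>a'\<in>{1..h}. \<Sum>b'\<in>{1..<a'}. (if (a,b) = (a',b') then ns a' * ns b' else 0))"
    unfolding Jms_def by (simp add: count_sum)
  also have "\<dots> = (\<Sum>a'\<in>{1..h}. if a' = a then (if b \<in> {1..<a'} then ns a' * ns b else 0) else 0)"
    by (intro sum.cong refl) (auto simp: sum.delta)
  also have "\<dots> = (if (a,b) \<in> Jset h then ns a * ns b else 0)"
    by (simp add: sum.delta Jset_def)
  finally show ?thesis .
qed

lemma size_Jms: "size (Jms h ns) = Tval h ns"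
  unfolding Jms_def Tval_def by (simp add: size_multiset_sum)

lemma set_Jms: "set_mset (Jms h ns) \<subseteq> Jset h"
  using count_Jms by (metis (no_types, lifting) count_eq_zero_iff subrelI)

lemma Tval_pos: "h \<ge> 2 \<Longrightarrow> \<forall>a\<in>{1..h}. ns a > 0 \<Longrightarrow> Tval h ns > 0"
proof -
  assume h: "h \<ge> 2" and ns: "\<forall>a\<in>{1..h}. ns a > 0"
  have "0 < count (Jms h ns) (2,1)" using h ns by (simp add: count_Jms Jset_def)
  also have "\<dots> \<le> size (Jms h ns)" by (rule count_le_size)
  finally show ?thesis by (simp add: size_Jms)
qed

lemma E_bind_J:
  fixes g :: "'b \<Rightarrow> real"
  assumes h: "h \<ge> 2" and ns: "\<forall>a\<in>{1..h}. ns a > 0" and fin: "\<forall>ab\<in>Jset h. finite (set_pmf (f ab))"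
  shows "measure_pmf.expectation (J_pmf h ns \<bind> f) g =
     (\<Sum>ab\<in>Jset h. (real (ns (fst ab) * ns (snd ab)) / Tval h ns) * measure_pmf.expectation (f ab) g)"
proof -
  have ne: "Jms h ns \<noteq> {#}" proof
    assume "Jms h ns = {#}"
    then have "Tval h ns = 0" using size_Jms[of h ns] by simp
    then show False using Tval_pos[OF h ns] by simp
  qed
  have J: "J_pmf h ns = pmf_of_multiset (Jms h ns)" unfolding J_pmf_def Jms_def ..
  have "measure_pmf.expectation (J_pmf h ns \<bind> f) g = (\<Sum>ab\<in>Jset h. pmf (J_pmf h ns) ab *\<^sub>R measure_pmf.expectation (f ab) g)"
    using fin set_Jms ne unfolding J by (intro pmf_expectation_bind) auto
  also have "\<dots> = (\<Sum>ab\<in>Jset h. (real (ns (fst ab) * ns (snd ab)) / Tval h ns) * measure_pmf.expectation (f ab) g)"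
    unfolding J using ne by (intro sum.cong refl) (auto simp: count_Jms size_Jms)
  finally show ?thesis .
qed



lemma idx_set_props:
  assumes p: "p \<in> mperms h ns" and a: "a \<in> {1..h}" and ns: "\<forall>a\<in>{1..h}. ns a > 0"
  shows "finite {k. k < length p \<and> p!k = a}" "{k. k < length p \<and> p!k = a} \<noteq> {}"
        "card {k. k < length p \<and> p!k = a} = ns a"
proof -
  show "finite {k. k < length p \<and> p!k = a}" by auto
  show c: "card {k. k < length p \<and> p!k = a} = ns a" using mperms_card_val[OF p a] .
  show "{k. k < length p \<and> p!k = a} \<noteq> {}" using c ns a by (metis card.empty less_not_refl)
qed

lemma inner:
  fixes G :: "nat list \<Rightarrow> real"
  assumes h: "h \<ge> 2" and ns: "\<forall>a\<in>{1..h}. ns a > 0" and p: "p \<in> mperms h ns"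
  shows "measure_pmf.expectation (J_pmf h ns \<bind> (\<lambda>J. if p!i > p!Suc i then return_pmf p else
           pmf_of_set {k. k<length p \<and> p!k = fst J} \<bind> (\<lambda>i'. pmf_of_set {k. k<length p \<and> p!k = snd J} \<bind>
             (\<lambda>j'. return_pmf (modify p i i' j'))))) G
   = (if p!i > p!Suc i then G p else
       (\<Sum>ab\<in>Jset h. \<Sum>i'\<in>{k. k<length p \<and> p!k = fst ab}. \<Sum>j'\<in>{k. k<length p \<and> p!k = snd ab}. G (modify p i i' j')) / Tval h ns)"
proof (cases "p!i > p!Suc i")
  case True then show ?thesis by simp
next
  case False
  define A where "A = (\<lambda>a. {k. k<length p \<and> p!k = a})"
  have Aprops: "finite (A a)" "A a \<noteq> {}" "card (A a) = ns a" if "a \<in> {1..h}" for a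
    using idx_set_props[OF p that ns] unfolding A_def by auto
  have ab: "fst ab \<in> {1..h}" "snd ab \<in> {1..h}" if "ab \<in> Jset h" for ab
    using that unfolding Jset_def by auto
  have inner2: "measure_pmf.expectation (pmf_of_set (A (fst ab)) \<bind> (\<lambda>i'. pmf_of_set (A (snd ab)) \<bind>
             (\<lambda>j'. return_pmf (modify p i i' j')))) G
      = (\<Sum>i'\<in>A (fst ab). \<Sum>j'\<in>A (snd ab). G (modify p i i' j')) / (ns (fst ab) * ns (snd ab))"
    if "ab \<in> Jset h" for ab
  proof -
    note a1 = Aprops[OF ab(1)[OF that]] and a2 = Aprops[OF ab(2)[OF that]]
    have "measure_pmf.expectation (pmf_of_set (A (fst ab)) \<bind> (\<lambda>i'. pmf_of_set (A (snd ab)) \<bind>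
             (\<lambda>j'. return_pmf (modify p i i' j')))) G
       = (\<Sum>i'\<in>A (fst ab). measure_pmf.expectation (pmf_of_set (A (snd ab)) \<bind> (\<lambda>j'. return_pmf (modify p i i' j'))) G) / card (A (fst ab))"
      using a1 a2 by (intro E_bind_set) (auto intro!: fin_bind_set)
    also have "\<dots> = (\<Sum>i'\<in>A (fst ab). (\<Sum>j'\<in>A (snd ab). G (modify p i i' j')) / card (A (snd ab))) / card (A (fst ab))"
      using a1 a2 by (subst E_bind_set) (auto)
    also have "\<dots> = (\<Sum>i'\<in>A (fst ab). \<Sum>j'\<in>A (snd ab). G (modify p i i' j')) / (ns (fst ab) * ns (snd ab))"
      using a1 a2 by (simp add: sum_divide_distrib[symmetric])
    finally show ?thesis .
  qed
  have "measure_pmf.expectation (J_pmf h ns \<bind> (\<lambda>J. if p!i > p!Suc i then return_pmf p else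
           pmf_of_set {k. k<length p \<and> p!k = fst J} \<bind> (\<lambda>i'. pmf_of_set {k. k<length p \<and> p!k = snd J} \<bind>
             (\<lambda>j'. return_pmf (modify p i i' j'))))) G
     = measure_pmf.expectation (J_pmf h ns \<bind> (\<lambda>J. pmf_of_set (A (fst J)) \<bind> (\<lambda>i'. pmf_of_set (A (snd J)) \<bind>
             (\<lambda>j'. return_pmf (modify p i i' j'))))) G"
    using False unfolding A_def by simp
  also have "\<dots> = (\<Sum>ab\<in>Jset h. (real (ns (fst ab) * ns (snd ab)) / Tval h ns) *
       measure_pmf.expectation (pmf_of_set (A (fst ab)) \<bind> (\<lambda>i'. pmf_of_set (A (snd ab)) \<bind>
             (\<lambda>j'. return_pmf (modify p i i' j')))) G)"
  proof (rule E_bind_J[OF h ns])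
    show "\<forall>ab\<in>Jset h. finite (set_pmf (pmf_of_set (A (fst ab)) \<bind> (\<lambda>i'. pmf_of_set (A (snd ab)) \<bind>
             (\<lambda>j'. return_pmf (modify p i i' j')))))"
    proof
      fix ab assume "ab \<in> Jset h"
      note a1 = Aprops[OF ab(1)[OF this]] and a2 = Aprops[OF ab(2)[OF this]]
      show "finite (set_pmf (pmf_of_set (A (fst ab)) \<bind> (\<lambda>i'. pmf_of_set (A (snd ab)) \<bind>
             (\<lambda>j'. return_pmf (modify p i i' j')))))"
        using a1 a2 by (intro fin_bind_set) auto
    qed
  qed
  also have "\<dots> = (\<Sum>ab\<in>Jset h. (\<Sum>i'\<in>A (fst ab). \<Sum>j'\<in>A (snd ab). G (modify p i i' j')) / Tval h ns)"
  proof (rule sum.cong[OF refl])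
    fix ab assume abJ: "ab \<in> Jset h"
    have "ns (fst ab) > 0" "ns (snd ab) > 0" using ns ab[OF abJ] by auto
    then show "(real (ns (fst ab) * ns (snd ab)) / Tval h ns) *
       measure_pmf.expectation (pmf_of_set (A (fst ab)) \<bind> (\<lambda>i'. pmf_of_set (A (snd ab)) \<bind>
             (\<lambda>j'. return_pmf (modify p i i' j')))) G = (\<Sum>i'\<in>A (fst ab). \<Sum>j'\<in>A (snd ab). G (modify p i i' j')) / Tval h ns"
      unfolding inner2[OF abJ] by (simp add: field_simps)
  qed
  also have "\<dots> = (\<Sum>ab\<in>Jset h. \<Sum>i'\<in>A (fst ab). \<Sum>j'\<in>A (snd ab). G (modify p i i' j')) / Tval h ns"
    by (simp add: sum_divide_distrib)
  finally show ?thesis using False unfolding A_def by simp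
qed



lemma Jms_ne: "h \<ge> 2 \<Longrightarrow> \<forall>a\<in>{1..h}. ns a > 0 \<Longrightarrow> Jms h ns \<noteq> {#}"
proof
  assume h: "h \<ge> 2" and ns: "\<forall>a\<in>{1..h}. ns a > 0" and "Jms h ns = {#}"
  then have "Tval h ns = 0" using size_Jms[of h ns] by simp
  then show False using Tval_pos[OF h ns] by simp
qed

lemma fin_bind_J:
  assumes h: "h \<ge> 2" and ns: "\<forall>a\<in>{1..h}. ns a > 0" and fin: "\<forall>ab\<in>Jset h. finite (set_pmf (f ab))"
  shows "finite (set_pmf (J_pmf h ns \<bind> f))"
proof -
  have J: "J_pmf h ns = pmf_of_multiset (Jms h ns)" unfolding J_pmf_def Jms_def ..
  have "set_pmf (J_pmf h ns) \<subseteq> Jset h" unfolding J using Jms_ne[OF h ns] set_Jms by simp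
  then show ?thesis using fin by (auto simp: set_bind_pmf intro: finite_subset[OF _ finite_Jset] )
qed

definition inner_val :: "nat \<Rightarrow> (nat \<Rightarrow> nat) \<Rightarrow> (nat list \<Rightarrow> real) \<Rightarrow> nat list \<Rightarrow> nat \<Rightarrow> real" where
  "inner_val h ns G p i = (if p!i > p!Suc i then G p else
       (\<Sum>ab\<in>Jset h. \<Sum>i'\<in>{k. k<length p \<and> p!k = fst ab}. \<Sum>j'\<in>{k. k<length p \<and> p!k = snd ab}. G (modify p i i' j')) / Tval h ns)"

lemma pistar_E:
  fixes G :: "nat list \<Rightarrow> real"
  assumes h: "h \<ge> 2" and ns: "\<forall>a\<in>{1..h}. ns a > 0" and n: "(\<Sum>a\<in>{1..h}. ns a) \<ge> 4"
  shows "measure_pmf.expectation (pistar_pmf h ns) G =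
    (\<Sum>p\<in>mperms h ns. (\<Sum>i\<in>{0..<(\<Sum>a\<in>{1..h}. ns a) - 1}. inner_val h ns G p i) / ((\<Sum>a\<in>{1..h}. ns a) - 1)) / card (mperms h ns)"
proof -
  define n where "n = (\<Sum>a\<in>{1..h}. ns a)"
  define F where "F = (\<lambda>p i. J_pmf h ns \<bind> (\<lambda>J. if p!i > p!Suc i then return_pmf p else
           pmf_of_set {k. k<length p \<and> p!k = fst J} \<bind> (\<lambda>i'. pmf_of_set {k. k<length p \<and> p!k = snd J} \<bind>
             (\<lambda>j'. return_pmf (modify p i i' j')))))"
  have pis: "pistar_pmf h ns = pmf_of_set (mperms h ns) \<bind> (\<lambda>p. pmf_of_set {0..<length p - 1} \<bind> F p)"
    unfolding pistar_pmf_def pi_pmf_def F_def ..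
  have finF: "finite (set_pmf (F p i))" if p: "p \<in> mperms h ns" for p i
    unfolding F_def
  proof (rule fin_bind_J[OF h ns], rule ballI)
    fix ab assume "ab \<in> Jset h"
    then have a: "fst ab \<in> {1..h}" "snd ab \<in> {1..h}" unfolding Jset_def by auto
    show "finite (set_pmf (if p!i > p!Suc i then return_pmf p else
           pmf_of_set {k. k<length p \<and> p!k = fst ab} \<bind> (\<lambda>i'. pmf_of_set {k. k<length p \<and> p!k = snd ab} \<bind>
             (\<lambda>j'. return_pmf (modify p i i' j')))))"
      using idx_set_props[OF p a(1) ns] idx_set_props[OF p a(2) ns]
      by (auto intro!: fin_bind_set)
  qed
  have lenp: "length p = n" if "p \<in> mperms h ns" for p using mperms_length[OF that] unfolding n_def .
  have U: "finite {0..<length p - 1}" "{0..<length p - 1} \<noteq> {}" if "p \<in> mperms h ns" for p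
    using lenp[OF that] n unfolding n_def by auto
  have "measure_pmf.expectation (pistar_pmf h ns) G =
     (\<Sum>p\<in>mperms h ns. measure_pmf.expectation (pmf_of_set {0..<length p - 1} \<bind> F p) G) / card (mperms h ns)"
    unfolding pis using mperms_finite mperms_nonempty finF U
    by (intro E_bind_set) (auto intro!: fin_bind_set)
  also have "\<dots> = (\<Sum>p\<in>mperms h ns. (\<Sum>i\<in>{0..<n - 1}. inner_val h ns G p i) / (n - 1)) / card (mperms h ns)"
  proof (rule arg_cong[where f = "\<lambda>x. x / _"], rule sum.cong[OF refl])
    fix p assume p: "p \<in> mperms h ns"
    have "measure_pmf.expectation (pmf_of_set {0..<length p - 1} \<bind> F p) G
       = (\<Sum>i\<in>{0..<length p - 1}. measure_pmf.expectation (F p i) G) / card {0..<length p - 1}"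
      using U[OF p] finF[OF p] by (intro E_bind_set) auto
    also have "\<dots> = (\<Sum>i\<in>{0..<n - 1}. inner_val h ns G p i) / (n - 1)"
      using lenp[OF p] n unfolding F_def inner_val_def inner[OF h ns p] by (simp add: of_nat_diff)
    finally show "measure_pmf.expectation (pmf_of_set {0..<length p - 1} \<bind> F p) G = (\<Sum>i\<in>{0..<n - 1}. inner_val h ns G p i) / (n - 1)" .
  qed
  finally show ?thesis unfolding n_def .
qed



lemma sum_ab_partition:
  fixes G :: "nat list \<Rightarrow> real"
  assumes i: "Suc i < (\<Sum>a\<in>{1..h}. ns a)"
  shows "(\<Sum>ab\<in>Jset h. \<Sum>q\<in>{q\<in>mperms h ns. q!i = fst ab \<and> q!Suc i = snd ab}. G q)
       = (\<Sum>q\<in>mperms h ns. if q!i > q!Suc i then G q else 0)"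
proof -
  have "(\<Sum>ab\<in>Jset h. \<Sum>q\<in>{q\<in>mperms h ns. q!i = fst ab \<and> q!Suc i = snd ab}. G q)
      = (\<Sum>ab\<in>Jset h. \<Sum>q\<in>mperms h ns. if q!i = fst ab \<and> q!Suc i = snd ab then G q else 0)"
    by (rule sum.cong[OF refl]) (rule sum.inter_filter[OF mperms_finite])
  also have "\<dots> = (\<Sum>q\<in>mperms h ns. \<Sum>ab\<in>Jset h. if q!i = fst ab \<and> q!Suc i = snd ab then G q else 0)"
    by (rule sum.swap)
  also have "\<dots> = (\<Sum>q\<in>mperms h ns. if q!i > q!Suc i then G q else 0)"
  proof (intro sum.cong refl)
    fix q assume q: "q \<in> mperms h ns"
    have "i < length q" "Suc i < length q" using mperms_length[OF q] i by auto
    then have v: "q!i \<in> {1..h}" "q!Suc i \<in> {1..h}" using mperms_vals[OF q] by auto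
    have "(\<Sum>ab\<in>Jset h. if q!i = fst ab \<and> q!Suc i = snd ab then G q else 0) = (if (q!i, q!Suc i) \<in> Jset h then G q else 0)"
      by (subst sum.cong[OF refl, where h = "\<lambda>ab. if ab = (q!i, q!Suc i) then G q else 0"]) (auto simp: sum.delta)
    also have "\<dots> = (if q!i > q!Suc i then G q else 0)" using v unfolding Jset_def by auto
    finally show "(\<Sum>ab\<in>Jset h. if q!i = fst ab \<and> q!Suc i = snd ab then G q else 0) = (if q!i > q!Suc i then G q else 0)" .
  qed
  finally show ?thesis .
qed

lemma sum_inner:
  fixes G :: "nat list \<Rightarrow> real"
  assumes h: "h \<ge> 2" and ns: "\<forall>a\<in>{1..h}. ns a > 0" and i: "Suc i < (\<Sum>a\<in>{1..h}. ns a)"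
  defines "n \<equiv> (\<Sum>a\<in>{1..h}. ns a)"
  defines "K \<equiv> card {(k,l). k < n \<and> l < n \<and> k \<noteq> l} - Tval h ns"
  shows "(\<Sum>p\<in>mperms h ns. inner_val h ns G p i)
     = (1 + real K / Tval h ns) * (\<Sum>p\<in>mperms h ns. if p!i > p!Suc i then G p else 0)"
proof -
  let ?P = "mperms h ns"
  define X where "X = (\<lambda>p. \<Sum>ab\<in>Jset h. \<Sum>i'\<in>{k. k<n \<and> p!k = fst ab}. \<Sum>j'\<in>{k. k<n \<and> p!k = snd ab}. G (modify p i i' j'))"
  have lenp: "length p = n" if "p \<in> ?P" for p using mperms_length[OF that] unfolding n_def .
  have "(\<Sum>p\<in>?P. inner_val h ns G p i) = (\<Sum>p\<in>?P. (if p!i > p!Suc i then G p else 0) + (if p!i > p!Suc i then 0 else X p / Tval h ns))"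
    by (intro sum.cong refl) (auto simp: inner_val_def X_def lenp)
  also have "\<dots> = (\<Sum>p\<in>?P. if p!i > p!Suc i then G p else 0) + (\<Sum>p\<in>{p\<in>?P. \<not> p!i > p!Suc i}. X p) / Tval h ns"
  proof -
    have "(\<Sum>p\<in>?P. (if p!i > p!Suc i then 0 else X p / Tval h ns)) = (\<Sum>p\<in>{p\<in>?P. \<not> p!i > p!Suc i}. X p / Tval h ns)"
      by (subst sum.inter_filter[OF mperms_finite]) (auto intro: sum.cong)
    then show ?thesis by (simp add: sum.distrib sum_divide_distrib)
  qed
  also have "(\<Sum>p\<in>{p\<in>?P. \<not> p!i > p!Suc i}. X p) = (\<Sum>ab\<in>Jset h. \<Sum>p\<in>{p\<in>?P. \<not> p!i > p!Suc i}. \<Sum>i'\<in>{k. k<n \<and> p!k = fst ab}. \<Sum>j'\<in>{k. k<n \<and> p!k = snd ab}. G (modify p i i' j'))"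
    unfolding X_def by (rule sum.swap)
  also have "\<dots> = (\<Sum>ab\<in>Jset h. \<Sum>q\<in>{q\<in>?P. q!i = fst ab \<and> q!Suc i = snd ab}. real K * G q)"
  proof (rule sum.cong[OF refl])
    fix ab assume ab: "ab \<in> Jset h"
    then have lt: "snd ab < fst ab" unfolding Jset_def by auto
    have "(\<Sum>p\<in>{p\<in>?P. \<not> p!i > p!Suc i}. \<Sum>i'\<in>{k. k<n \<and> p!k = fst ab}. \<Sum>j'\<in>{k. k<n \<and> p!k = snd ab}. G (modify p i i' j'))
      = (\<Sum>q\<in>{q\<in>?P. q!i = fst ab \<and> q!Suc i = snd ab}. real (card {(k,l). k<n \<and> l<n \<and> k\<noteq>l \<and> q!k \<le> q!l}) * G q)"
      using lenp mperms_closed mperms_finite i lt unfolding n_def by (intro sum_modify) auto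
    also have "\<dots> = (\<Sum>q\<in>{q\<in>?P. q!i = fst ab \<and> q!Suc i = snd ab}. real K * G q)"
    proof (rule sum.cong[OF refl])
      fix q assume "q \<in> {q\<in>?P. q!i = fst ab \<and> q!Suc i = snd ab}"
      then have q: "q \<in> ?P" by auto
      have "card {(k,l). k<n \<and> l<n \<and> k\<noteq>l \<and> q!k \<le> q!l} = card (Kset q)"
        unfolding Kset_def lenp[OF q] ..
      also have "\<dots> = K" unfolding card_K[OF q] K_def lenp[OF q] ..
      finally show "real (card {(k,l). k<n \<and> l<n \<and> k\<noteq>l \<and> q!k \<le> q!l}) * G q = real K * G q" by simp
    qed
    finally show "(\<Sum>p\<in>{p\<in>?P. \<not> p!i > p!Suc i}. \<Sum>i'\<in>{k. k<n \<and> p!k = fst ab}. \<Sum>j'\<in>{k. k<n \<and> p!k = snd ab}. G (modify p i i' j'))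
      = (\<Sum>q\<in>{q\<in>?P. q!i = fst ab \<and> q!Suc i = snd ab}. real K * G q)" .
  qed
  also have "\<dots> = real K * (\<Sum>p\<in>?P. if p!i > p!Suc i then G p else 0)"
    using sum_ab_partition[OF i, of G] by (simp add: sum_distrib_left[symmetric])
  finally show ?thesis by (simp add: algebra_simps)
qed



lemma pistar_des:
  fixes G :: "nat list \<Rightarrow> real"
  assumes h: "h \<ge> 2" and ns: "\<forall>a\<in>{1..h}. ns a > 0" and n: "(\<Sum>a\<in>{1..h}. ns a) \<ge> 4"
  shows "\<exists>c. \<forall>G::nat list \<Rightarrow> real. measure_pmf.expectation (pistar_pmf h ns) G = c * (\<Sum>p\<in>mperms h ns. real (des p) * G p)"
proof -
  define n where "n = (\<Sum>a\<in>{1..h}. ns a)"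
  define K where "K = card {(k,l). k < n \<and> l < n \<and> k \<noteq> l} - Tval h ns"
  define c0 where "c0 = 1 + real K / Tval h ns"
  have lenp: "length p = n" if "p \<in> mperms h ns" for p using mperms_length[OF that] unfolding n_def .
  have S: "(\<Sum>p\<in>mperms h ns. \<Sum>i\<in>{0..<n - 1}. inner_val h ns G p i) = c0 * (\<Sum>p\<in>mperms h ns. real (des p) * G p)" for G
  proof -
    have "(\<Sum>p\<in>mperms h ns. \<Sum>i\<in>{0..<n - 1}. inner_val h ns G p i) = (\<Sum>i\<in>{0..<n - 1}. \<Sum>p\<in>mperms h ns. inner_val h ns G p i)"
      by (rule sum.swap)
    also have "\<dots> = (\<Sum>i\<in>{0..<n - 1}. c0 * (\<Sum>p\<in>mperms h ns. if p!i > p!Suc i then G p else 0))"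
      using sum_inner[OF h ns, of _ G] unfolding c0_def K_def n_def by (intro sum.cong refl) auto
    also have "\<dots> = c0 * (\<Sum>p\<in>mperms h ns. \<Sum>i\<in>{0..<n - 1}. if p!i > p!Suc i then G p else 0)"
      by (simp add: sum_distrib_left) (rule sum.swap)
    also have "(\<Sum>p\<in>mperms h ns. \<Sum>i\<in>{0..<n - 1}. if p!i > p!Suc i then G p else 0) = (\<Sum>p\<in>mperms h ns. real (des p) * G p)"
    proof (rule sum.cong[OF refl])
      fix p assume p: "p \<in> mperms h ns"
      have "(\<Sum>i\<in>{0..<n - 1}. if p!i > p!Suc i then G p else 0) = (\<Sum>i\<in>{i\<in>{0..<n - 1}. p!i > p!Suc i}. G p)"
        by (rule sum.inter_filter[symmetric]) simp
      also have "{i\<in>{0..<n - 1}. p!i > p!Suc i} = {i. Suc i < length p \<and> p ! i > p ! Suc i}"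
        using lenp[OF p] by auto
      finally show "(\<Sum>i\<in>{0..<n - 1}. if p!i > p!Suc i then G p else 0) = real (des p) * G p"
        by (simp add: des_def)
    qed
    finally show ?thesis .
  qed
  show ?thesis
  proof (intro exI allI)
    fix G :: "nat list \<Rightarrow> real"
    show "measure_pmf.expectation (pistar_pmf h ns) G = c0 / ((real n - 1) * card (mperms h ns)) * (\<Sum>p\<in>mperms h ns. real (des p) * G p)"
      unfolding pistar_E[OF h ns n] n_def[symmetric]
      using S[of G] n unfolding n_def
      apply (simp add: sum_divide_distrib[symmetric] of_nat_diff)
      done
  qed
qed



theorem lemma2p14:
  fixes h :: nat and ns :: "nat \<Rightarrow> nat"
  assumes "h \<ge> 2"
    and "\<forall>a\<in>{1..h}. ns a > 0"
    and "(\<Sum>a\<in>{1..h}. ns a) \<ge> 4"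
  shows "size_biased (map_pmf (\<lambda>p. real (des p)) (pi_pmf h ns))
                     (map_pmf (\<lambda>p. real (des p)) (pistar_pmf h ns))"
proof -
  let ?P = "mperms h ns"
  let ?X = "map_pmf (\<lambda>p. real (des p)) (pi_pmf h ns)"
  let ?Y = "map_pmf (\<lambda>p. real (des p)) (pistar_pmf h ns)"
  obtain c where c: "\<And>G::nat list \<Rightarrow> real. measure_pmf.expectation (pistar_pmf h ns) G = c * (\<Sum>p\<in>?P. real (des p) * G p)"
    using pistar_des[OF assms] by blast
  have fin: "finite ?P" "?P \<noteq> {}" using mperms_finite mperms_nonempty by auto
  have setX: "set_pmf ?X = (\<lambda>p. real (des p)) ` ?P" unfolding pi_pmf_def using fin by simp
  have EX: "measure_pmf.expectation ?X g = (\<Sum>p\<in>?P. g (real (des p))) / card ?P" for g :: "real \<Rightarrow> real"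
    unfolding pi_pmf_def using fin by (simp add: integral_pmf_of_set)
  have EY: "measure_pmf.expectation ?Y f = c * (\<Sum>p\<in>?P. real (des p) * f (real (des p)))" for f :: "real \<Rightarrow> real"
    using c[of "\<lambda>p. f (real (des p))"] by simp
  have one: "c * (\<Sum>p\<in>?P. real (des p)) = 1"
    using EY[of "\<lambda>_. 1"] by simp
  have sumpos: "(\<Sum>p\<in>?P. real (des p)) > 0"
  proof -
    have "(\<Sum>p\<in>?P. real (des p)) \<ge> 0" by (simp add: sum_nonneg)
    moreover have "(\<Sum>p\<in>?P. real (des p)) \<noteq> 0" using one by auto
    ultimately show ?thesis by simp
  qed
  have cardpos: "real (card ?P) > 0" using fin by (simp add: card_gt_0_iff)
  show ?thesis
    unfolding size_biased_def
  proof (intro conjI allI impI)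
    show "AE x in measure_pmf ?X. 0 \<le> x" by (simp add: AE_measure_pmf_iff setX)
    show "integrable (measure_pmf ?X) (\<lambda>x. x)"
      by (rule integrable_measure_pmf_finite) (unfold setX, use fin in simp)
    show "measure_pmf.expectation ?X (\<lambda>x. x) > 0"
      unfolding EX using sumpos cardpos by simp
    fix f :: "real \<Rightarrow> real"
    show "measure_pmf.expectation ?X (\<lambda>x. x * f x) = measure_pmf.expectation ?X (\<lambda>x. x) * measure_pmf.expectation ?Y f"
      unfolding EX EY
    proof -
      have "(\<Sum>p\<in>?P. real (des p) * f (real (des p))) / card ?P
          = ((\<Sum>p\<in>?P. real (des p)) / card ?P) * (c * (\<Sum>p\<in>?P. real (des p) * f (real (des p))))"
        using one by (simp add: field_simps)
      then show "(\<Sum>p\<in>?P. real (des p) * f (real (des p))) / card ?P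
          = ((\<Sum>p\<in>?P. real (des p)) / card ?P) * (c * (\<Sum>p\<in>?P. real (des p) * f (real (des p))))" .
    qed
  qed
qed


end
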